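(* Let $G$ be a graph with vertex set $[n]$ and fix a threshold $r\ge2$. Let $\mathcal{D}_0$ be any probability distribution over subsets of $[n]$ (a randomized rule for choosing seed sets). For $A\sim\mathcal{D}_0$ and each vertex $i$, let $p_i=\Pr[i\in A]$ and $q_i=\Pr[i\in\langle A\rangle]$, and assume $q_i>0$ for every $i$. Then there is a probability distribution $\mathcal{D}$ over contagious sets of $G$ such that for every vertex $i$, $\Pr_{S\sim\mathcal{D}}[i\in S]\le p_i/q_i$. In particular, if each vertex is a seed independently with probability $p$ and each vertex is activated with probability at least $1/C$ ($C>1$), then $m(G,r)\le Cpn$.
   Context: Bootstrap percolation with threshold $r\ge 2$ on a graph $G=(V,E)$: given a set $A_0\subseteq V$ of seeds, define for $i\ge1$ $A_i=A_{i-1}\cup\{v:|N(v)\cap A_{i-1}|\ge r\}$, where $N(v)$ is the set of neighbors of $v$, and $\langle A_0\rangle=\bigcup_i A_i$ (the set of activated vertices). The set $A_0$ is contagious if $\langle A_0\rangle=V$; $m(G,r)$ denotes the minimum cardinality of a contagious set. *)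

theory Defs
  imports "HOL-Probability.Probability"
begin

definition graph_on :: "nat \<Rightarrow> (nat \<Rightarrow> nat \<Rightarrow> bool) \<Rightarrow> bool" where
  "graph_on n E \<longleftrightarrow> (\<forall>u v. E u v \<longrightarrow> u \<in> {1..n} \<and> v \<in> {1..n} \<and> u \<noteq> v \<and> E v u)"

definition nbrs :: "nat \<Rightarrow> (nat \<Rightarrow> nat \<Rightarrow> bool) \<Rightarrow> nat \<Rightarrow> nat set" where
  "nbrs n E v = {u \<in> {1..n}. E v u}"

definition bp_step :: "nat \<Rightarrow> (nat \<Rightarrow> nat \<Rightarrow> bool) \<Rightarrow> nat \<Rightarrow> nat set \<Rightarrow> nat set" where
  "bp_step n E r A = A \<union> {v \<in> {1..n}. card (nbrs n E v \<inter> A) \<ge> r}"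

definition bp_closure :: "nat \<Rightarrow> (nat \<Rightarrow> nat \<Rightarrow> bool) \<Rightarrow> nat \<Rightarrow> nat set \<Rightarrow> nat set" where
  "bp_closure n E r A0 = (\<Union>i. (bp_step n E r ^^ i) A0)"

definition contagious :: "nat \<Rightarrow> (nat \<Rightarrow> nat \<Rightarrow> bool) \<Rightarrow> nat \<Rightarrow> nat set \<Rightarrow> bool" where
  "contagious n E r A0 \<longleftrightarrow> A0 \<subseteq> {1..n} \<and> bp_closure n E r A0 = {1..n}"

definition m_contag :: "nat \<Rightarrow> (nat \<Rightarrow> nat \<Rightarrow> bool) \<Rightarrow> nat \<Rightarrow> nat" where
  "m_contag n E r = Min (card ` {A. contagious n E r A})"

definition indep_seeds :: "nat \<Rightarrow> real \<Rightarrow> nat set pmf" where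
  "indep_seeds n p = map_pmf (\<lambda>f. {i. f i}) (Pi_pmf {1..n} False (\<lambda>_. bernoulli_pmf p))"

end

theory Submission
  imports Defs
begin

lemma bp_step_mono: "X \<subseteq> Y \<Longrightarrow> bp_step n E r X \<subseteq> bp_step n E r Y"
  unfolding bp_step_def
proof (intro Un_mono subsetI)
  fix v assume XY: "X \<subseteq> Y" and v: "v \<in> {v \<in> {1..n}. r \<le> card (nbrs n E v \<inter> X)}"
  have "finite (nbrs n E v \<inter> Y)" by (simp add: nbrs_def)
  hence "card (nbrs n E v \<inter> X) \<le> card (nbrs n E v \<inter> Y)" using XY by (intro card_mono) auto
  with v show "v \<in> {v \<in> {1..n}. r \<le> card (nbrs n E v \<inter> Y)}" by auto
qed auto

lemma bp_iter_mono: "X \<subseteq> Y \<Longrightarrow> (bp_step n E r ^^ k) X \<subseteq> (bp_step n E r ^^ k) Y"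
  by (induction k) (auto dest: bp_step_mono)

lemma bp_step_incr: "X \<subseteq> bp_step n E r X"
  unfolding bp_step_def by auto

lemma bp_iter_incr: "j \<le> k \<Longrightarrow> (bp_step n E r ^^ j) X \<subseteq> (bp_step n E r ^^ k) X"
  by (induction k rule: dec_induct) (use bp_step_incr in fastforce)+

lemma bp_closure_incr: "X \<subseteq> bp_closure n E r X"
  unfolding bp_closure_def by (metis UN_upper UNIV_I funpow_0)

lemma bp_closure_mono: "X \<subseteq> Y \<Longrightarrow> bp_closure n E r X \<subseteq> bp_closure n E r Y"
  unfolding bp_closure_def using bp_iter_mono[where X=X and Y=Y and n=n and E=E and r=r] by blast

lemma bp_closure_sub: "bp_closure n E r X \<subseteq> X \<union> {1..n}"
proof -
  have "(bp_step n E r ^^ k) X \<subseteq> X \<union> {1..n}" for k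
    by (induction k) (auto simp: bp_step_def)
  thus ?thesis unfolding bp_closure_def by auto
qed

lemma bp_closure_closed: "bp_step n E r (bp_closure n E r Y) \<subseteq> bp_closure n E r Y"
proof
  fix v assume v: "v \<in> bp_step n E r (bp_closure n E r Y)"
  show "v \<in> bp_closure n E r Y"
  proof (cases "v \<in> bp_closure n E r Y")
    case False
    with v have v1: "v \<in> {1..n}" and c: "r \<le> card (nbrs n E v \<inter> bp_closure n E r Y)"
      by (auto simp: bp_step_def)
    define F where "F = nbrs n E v \<inter> bp_closure n E r Y"
    have fin: "finite F" by (simp add: F_def nbrs_def)
    have "\<forall>x\<in>F. \<exists>j. x \<in> (bp_step n E r ^^ j) Y" by (auto simp: F_def bp_closure_def)
    then obtain g where g: "\<forall>x\<in>F. x \<in> (bp_step n E r ^^ g x) Y" by metis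
    define J where "J = Max (g ` F)"
    have "F \<subseteq> nbrs n E v \<inter> (bp_step n E r ^^ J) Y"
    proof
      fix x assume x: "x \<in> F"
      have "g x \<le> J" unfolding J_def using fin x by auto
      with g x show "x \<in> nbrs n E v \<inter> (bp_step n E r ^^ J) Y"
        using bp_iter_incr[of "g x" J n E r Y] by (auto simp: F_def)
    qed
    hence "card F \<le> card (nbrs n E v \<inter> (bp_step n E r ^^ J) Y)"
      by (intro card_mono) (auto simp: nbrs_def)
    hence "v \<in> (bp_step n E r ^^ Suc J) Y" using c v1 by (auto simp: F_def bp_step_def)
    thus ?thesis unfolding bp_closure_def by blast
  qed
qed

lemma bp_closure_least: "X \<subseteq> bp_closure n E r Y \<Longrightarrow> bp_closure n E r X \<subseteq> bp_closure n E r Y"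
proof -
  assume XY: "X \<subseteq> bp_closure n E r Y"
  have "(bp_step n E r ^^ k) X \<subseteq> bp_closure n E r Y" for k
  proof (induction k)
    case (Suc k)
    then show ?case using bp_step_mono[OF Suc, of n E r] bp_closure_closed[of n E r Y] by auto
  qed (use XY in auto)
  thus ?thesis unfolding bp_closure_def by auto
qed

lemma measure_bind_pmf': "measure (measure_pmf (bind_pmf M f)) X = (\<integral>x. measure (measure_pmf (f x)) X \<partial>measure_pmf M)"
  unfolding measure_pmf_bind
  by (subst measure_pmf.measure_bind[where N="count_space UNIV"]) (auto simp: measure_pmf_in_subprob_space)

lemma measure_cond_pmf':
  assumes "set_pmf p \<inter> s \<noteq> {}"
  shows "measure (measure_pmf (cond_pmf p s)) X = measure (measure_pmf p) (s \<inter> X) / measure (measure_pmf p) s"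
  unfolding cond_pmf.rep_eq[OF assms]
  by (subst measure_uniform_measure) (auto simp: measure_pmf.emeasure_eq_measure measure_measure_pmf_not_zero[OF assms])

lemma main_ind:
  fixes D0 :: "nat set pmf"
  assumes supp: "set_pmf D0 \<subseteq> Pow {1..n}"
    and pos: "\<forall>i\<in>{1..n}. measure_pmf.prob D0 {A. i \<in> bp_closure n E r A} > 0"
  shows "\<exists>D. (\<forall>T\<in>set_pmf D. T \<inter> C = {} \<and> T \<subseteq> {1..n} \<and> {1..n} \<subseteq> bp_closure n E r (C \<union> T)) \<and>
     (\<forall>i\<in>{1..n}-C. measure_pmf.prob D {T. i\<in>T} \<le> measure_pmf.prob D0 {A. i\<in>A} / measure_pmf.prob D0 {A. i \<in> bp_closure n E r A})"
proof (induction "card ({1..n} - C)" arbitrary: C rule: less_induct)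
  case less
  let ?cl = "bp_closure n E r"
  show ?case
  proof (cases "{1..n} \<subseteq> C")
    case True
    show ?thesis by (rule exI[of _ "return_pmf {}"]) (use True bp_closure_incr[of C n E r] in auto)
  next
    case False
    from False obtain i0 where i0: "i0 \<in> {1..n}" "i0 \<notin> C" by (auto simp: subset_iff)
    define B where "B = {A. \<not> ?cl A \<subseteq> C}"
    have sub0: "{A. i0 \<in> ?cl A} \<subseteq> B" using i0 by (auto simp: B_def)
    have "0 < measure_pmf.prob D0 {A. i0 \<in> ?cl A}" using pos i0 by auto
    hence ne: "set_pmf D0 \<inter> B \<noteq> {}" using measure_pmf_zero_iff[of D0 "{A. i0 \<in> ?cl A}"] sub0 by auto
    define M where "M = cond_pmf D0 B"
    have setM: "set_pmf M = set_pmf D0 \<inter> B" unfolding M_def using ne by simp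
    have finM: "finite (set_pmf M)"
      by (rule finite_subset[of _ "Pow {1..n}"]) (use setM supp in auto)
    have dec: "card ({1..n} - (C \<union> ?cl A)) < card ({1..n} - C)" if "A \<in> set_pmf M" for A
    proof -
      from that setM supp have A: "A \<subseteq> {1..n}" "\<not> ?cl A \<subseteq> C" by (auto simp: B_def)
      then obtain x where "x \<in> ?cl A" "x \<notin> C" by auto
      moreover have "?cl A \<subseteq> {1..n}" using bp_closure_sub[of n E r A] A by auto
      ultimately show ?thesis by (intro psubset_card_mono) auto
    qed
    have "\<forall>A\<in>set_pmf M. \<exists>D. (\<forall>T\<in>set_pmf D. T \<inter> (C \<union> ?cl A) = {} \<and> T \<subseteq> {1..n} \<and> {1..n} \<subseteq> ?cl ((C \<union> ?cl A) \<union> T)) \<and>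
       (\<forall>i\<in>{1..n}-(C \<union> ?cl A). measure_pmf.prob D {T. i\<in>T} \<le> measure_pmf.prob D0 {A. i\<in>A} / measure_pmf.prob D0 {A. i \<in> ?cl A})"
      by (intro ballI) (rule less(1)[OF dec])
    from bchoice[OF this] obtain F where F: "\<forall>A\<in>set_pmf M. (\<forall>T\<in>set_pmf (F A). T \<inter> (C \<union> ?cl A) = {} \<and> T \<subseteq> {1..n} \<and> {1..n} \<subseteq> ?cl ((C \<union> ?cl A) \<union> T)) \<and>
       (\<forall>i\<in>{1..n}-(C \<union> ?cl A). measure_pmf.prob (F A) {T. i\<in>T} \<le> measure_pmf.prob D0 {A. i\<in>A} / measure_pmf.prob D0 {A. i \<in> ?cl A})"
      by (elim exE) (rule that)
    define D where "D = bind_pmf M (\<lambda>A. map_pmf (\<lambda>T. (A - C) \<union> T) (F A))"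
    show ?thesis
    proof (intro exI[of _ D] conjI ballI)
      fix S assume "S \<in> set_pmf D"
      then obtain A T where A: "A \<in> set_pmf M" and T: "T \<in> set_pmf (F A)" and S: "S = (A - C) \<union> T"
        by (auto simp: D_def)
      have Asub: "A \<subseteq> {1..n}" using A setM supp by auto
      from F A T have T1: "T \<inter> (C \<union> ?cl A) = {}" "T \<subseteq> {1..n}" "{1..n} \<subseteq> ?cl ((C \<union> ?cl A) \<union> T)"
        by simp_all
      show "S \<inter> C = {}" using T1 S by auto
      show "S \<subseteq> {1..n}" using T1 S Asub by auto
      have "(C \<union> ?cl A) \<union> T \<subseteq> ?cl (C \<union> S)"
      proof -
        have "A \<subseteq> C \<union> S" using S by auto
        hence "?cl A \<subseteq> ?cl (C \<union> S)" by (rule bp_closure_mono)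
        moreover have "C \<union> T \<subseteq> ?cl (C \<union> S)" using S bp_closure_incr[of "C \<union> S" n E r] by auto
        ultimately show ?thesis by auto
      qed
      hence "?cl ((C \<union> ?cl A) \<union> T) \<subseteq> ?cl (C \<union> S)" by (rule bp_closure_least)
      with T1 show "{1..n} \<subseteq> ?cl (C \<union> S)" by auto
    next
      fix i assume i: "i \<in> {1..n} - C"
      define p where "p = measure_pmf.prob D0 {A. i \<in> A}"
      define q where "q = measure_pmf.prob D0 {A. i \<in> ?cl A}"
      define \<beta> where "\<beta> = measure_pmf.prob D0 B"
      define g where "g = (\<lambda>A. indicator {A. i \<in> A} A + (p/q) * indicator {A. i \<notin> ?cl A} A :: real)"
      have q: "q > 0" using pos i q_def by auto
      have pq: "p / q \<ge> 0" using q by (simp add: p_def)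
      have subB: "{A. i \<in> ?cl A} \<subseteq> B" using i by (auto simp: B_def)
      have bq: "\<beta> \<ge> q" unfolding \<beta>_def q_def by (rule measure_pmf.finite_measure_mono[OF subB]) simp
      have "measure_pmf.prob D {T. i\<in>T} = (\<integral>A. measure_pmf.prob (map_pmf (\<lambda>T. (A - C) \<union> T) (F A)) {T. i\<in>T} \<partial>M)"
        unfolding D_def by (rule measure_bind_pmf')
      also have "\<dots> \<le> (\<integral>A. g A \<partial>M)"
      proof (rule integral_mono_AE)
        show "integrable (measure_pmf M) (\<lambda>A. measure_pmf.prob (map_pmf (\<lambda>T. (A - C) \<union> T) (F A)) {T. i\<in>T})"
          by (rule integrable_measure_pmf_finite[OF finM])
        show "integrable (measure_pmf M) g" by (rule integrable_measure_pmf_finite[OF finM])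
        show "AE A in measure_pmf M. measure_pmf.prob (map_pmf (\<lambda>T. (A - C) \<union> T) (F A)) {T. i\<in>T} \<le> g A"
        proof (rule AE_pmfI)
          fix A assume A: "A \<in> set_pmf M"
          have eq: "measure_pmf.prob (map_pmf (\<lambda>T. (A - C) \<union> T) (F A)) {T. i\<in>T}
              = measure_pmf.prob (F A) {T. i \<in> A - C \<or> i \<in> T}" by (simp add: vimage_def)
          show "measure_pmf.prob (map_pmf (\<lambda>T. (A - C) \<union> T) (F A)) {T. i\<in>T} \<le> g A"
          proof (cases "i \<in> A")
            case True
            have g1: "g A \<ge> 1" unfolding g_def using True pq by (simp add: indicator_def)
            show ?thesis unfolding eq using g1 measure_pmf.prob_le_1[of "F A" "{T. i \<in> A - C \<or> i \<in> T}"]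
              by linarith
          next
            case nA: False
            show ?thesis
            proof (cases "i \<in> ?cl A")
              case True
              have FA: "\<forall>T\<in>set_pmf (F A). T \<inter> (C \<union> ?cl A) = {}" using F A by simp
              have "set_pmf (F A) \<inter> {T. i \<in> A - C \<or> i \<in> T} = {}"
              proof (rule ccontr)
                assume "set_pmf (F A) \<inter> {T. i \<in> A - C \<or> i \<in> T} \<noteq> {}"
                then obtain T where "T \<in> set_pmf (F A)" "i \<in> T" using nA by auto
                with FA True show False by auto
              qed
              hence "measure_pmf.prob (F A) {T. i \<in> A - C \<or> i \<in> T} = 0" by (simp add: measure_pmf_zero_iff)
              then show ?thesis unfolding eq g_def using True nA by simp
            next
              case False
              have "i \<in> {1..n} - (C \<union> ?cl A)" using i False by auto
              hence "measure_pmf.prob (F A) {T. i \<in> T} \<le> p / q" using F A by (auto simp: p_def q_def)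
              then show ?thesis unfolding eq g_def using False nA by simp
            qed
          qed
        qed
      qed
      also have "(\<integral>A. g A \<partial>M) = measure_pmf.prob M {A. i \<in> A} + (p/q) * measure_pmf.prob M {A. i \<notin> ?cl A}"
        unfolding g_def
        by (subst Bochner_Integration.integral_add) (auto simp: integrable_measure_pmf_finite[OF finM])
      also have "measure_pmf.prob M {A. i \<in> A} = p / \<beta>"
      proof -
        have "A \<in> B" if "i \<in> A" for A
        proof -
          have "i \<in> ?cl A" using that bp_closure_incr[of A n E r] by (rule subsetD[rotated])
          thus ?thesis using subB by auto
        qed
        hence "B \<inter> {A. i \<in> A} = {A. i \<in> A}" by auto
        thus ?thesis unfolding M_def using measure_cond_pmf'[OF ne] by (simp add: p_def \<beta>_def)
      qed
      also have "measure_pmf.prob M {A. i \<notin> ?cl A} = (\<beta> - q) / \<beta>"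
      proof -
        have "B \<inter> {A. i \<notin> ?cl A} = B - {A. i \<in> ?cl A}" by blast
        moreover have "measure_pmf.prob D0 (B - {A. i \<in> ?cl A}) = \<beta> - q"
          unfolding \<beta>_def q_def by (rule measure_pmf.finite_measure_Diff) (use subB in auto)
        ultimately show ?thesis unfolding M_def using measure_cond_pmf'[OF ne] by (simp add: \<beta>_def)
      qed
      also have "p / \<beta> + p / q * ((\<beta> - q) / \<beta>) = p / q"
        using q bq by (simp add: field_simps)
      finally show "measure_pmf.prob D {T. i\<in>T} \<le> measure_pmf.prob D0 {A. i\<in>A} / measure_pmf.prob D0 {A. i \<in> ?cl A}"
        by (simp add: p_def q_def)
    qed
  qed
qed
theorem lemma2:
  fixes n r :: nat and E :: "nat \<Rightarrow> nat \<Rightarrow> bool"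
  assumes "graph_on n E" and "r \<ge> 2"
  shows "(\<forall>D0 :: nat set pmf.
            set_pmf D0 \<subseteq> Pow {1..n} \<longrightarrow>
            (\<forall>i\<in>{1..n}. measure_pmf.prob D0 {A. i \<in> bp_closure n E r A} > 0) \<longrightarrow>
            (\<exists>D :: nat set pmf.
               (\<forall>S\<in>set_pmf D. contagious n E r S) \<and>
               (\<forall>i\<in>{1..n}. measure_pmf.prob D {S. i \<in> S}
                  \<le> measure_pmf.prob D0 {A. i \<in> A} / measure_pmf.prob D0 {A. i \<in> bp_closure n E r A})))
       \<and> (\<forall>(p::real) (C::real).
            0 \<le> p \<longrightarrow> p \<le> 1 \<longrightarrow> C > 1 \<longrightarrow>
            (\<forall>i\<in>{1..n}. measure_pmf.prob (indep_seeds n p) {A. i \<in> bp_closure n E r A} \<ge> 1 / C) \<longrightarrow>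
            real (m_contag n E r) \<le> C * p * real n)"
proof (intro conjI allI impI)
  let ?cl = "bp_closure n E r"
  fix D0 :: "nat set pmf"
  assume supp: "set_pmf D0 \<subseteq> Pow {1..n}"
    and pos: "\<forall>i\<in>{1..n}. measure_pmf.prob D0 {A. i \<in> ?cl A} > 0"
  from main_ind[OF supp pos, of "{}"] obtain D where
    D: "\<forall>T\<in>set_pmf D. T \<inter> {} = {} \<and> T \<subseteq> {1..n} \<and> {1..n} \<subseteq> ?cl ({} \<union> T)"
    "\<forall>i\<in>{1..n}-{}. measure_pmf.prob D {T. i\<in>T} \<le> measure_pmf.prob D0 {A. i\<in>A} / measure_pmf.prob D0 {A. i \<in> ?cl A}"
    by blast
  show "\<exists>D :: nat set pmf.
               (\<forall>S\<in>set_pmf D. contagious n E r S) \<and>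
               (\<forall>i\<in>{1..n}. measure_pmf.prob D {S. i \<in> S}
                  \<le> measure_pmf.prob D0 {A. i \<in> A} / measure_pmf.prob D0 {A. i \<in> bp_closure n E r A})"
  proof (intro exI[of _ D] conjI ballI)
    fix S assume S: "S \<in> set_pmf D"
    with D(1) have "S \<subseteq> {1..n}" "{1..n} \<subseteq> ?cl S" by auto
    moreover have "?cl S \<subseteq> {1..n}" using bp_closure_sub[of n E r S] \<open>S \<subseteq> {1..n}\<close> by auto
    ultimately show "contagious n E r S" unfolding contagious_def by auto
  next
    fix i assume "i \<in> {1..n}"
    with D(2) show "measure_pmf.prob D {S. i \<in> S}
                  \<le> measure_pmf.prob D0 {A. i \<in> A} / measure_pmf.prob D0 {A. i \<in> bp_closure n E r A}" by auto
  qed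
next
  let ?cl = "bp_closure n E r"
  fix p C :: real
  assume p0: "0 \<le> p" and p1: "p \<le> 1" and C1: "C > 1"
    and hq: "\<forall>i\<in>{1..n}. measure_pmf.prob (indep_seeds n p) {A. i \<in> ?cl A} \<ge> 1 / C"
  define D0 where "D0 = indep_seeds n p"
  have supp: "set_pmf D0 \<subseteq> Pow {1..n}"
  proof
    fix A assume "A \<in> set_pmf D0"
    then obtain f where f: "f \<in> set_pmf (Pi_pmf {1..n} False (\<lambda>_. bernoulli_pmf p))" and A: "A = {i. f i}"
      by (auto simp: D0_def indep_seeds_def)
    have "\<forall>x. x \<notin> {1..n} \<longrightarrow> f x = False"
      using set_Pi_pmf_subset[of "{1..n}" False "\<lambda>_. bernoulli_pmf p"] f by blast
    thus "A \<in> Pow {1..n}" using A by blast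
  qed
  have pos: "\<forall>i\<in>{1..n}. measure_pmf.prob D0 {A. i \<in> ?cl A} > 0"
  proof
    fix i assume "i \<in> {1..n}"
    with hq have "measure_pmf.prob D0 {A. i \<in> ?cl A} \<ge> 1 / C" by (simp add: D0_def)
    moreover have "1 / C > 0" using C1 by simp
    ultimately show "measure_pmf.prob D0 {A. i \<in> ?cl A} > 0" by linarith
  qed
  have pi: "measure_pmf.prob D0 {A. i \<in> A} = p" if i: "i \<in> {1..n}" for i
  proof -
    have "measure_pmf.prob D0 {A. i \<in> A} = measure_pmf.prob (Pi_pmf {1..n} False (\<lambda>_. bernoulli_pmf p)) {f. f i}"
      by (simp add: D0_def indep_seeds_def vimage_def)
    also have "\<dots> = measure_pmf.prob (map_pmf (\<lambda>f. f i) (Pi_pmf {1..n} False (\<lambda>_. bernoulli_pmf p))) {True}"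
      by (simp add: vimage_def)
    also have "\<dots> = measure_pmf.prob (bernoulli_pmf p) {True}"
      by (subst Pi_pmf_component) (use i in auto)
    also have "\<dots> = p" using p0 p1 by (simp add: measure_pmf_single)
    finally show ?thesis .
  qed
  from main_ind[OF supp pos, of "{}"] obtain D where
    D: "\<forall>T\<in>set_pmf D. T \<inter> {} = {} \<and> T \<subseteq> {1..n} \<and> {1..n} \<subseteq> ?cl ({} \<union> T)"
    "\<forall>i\<in>{1..n}-{}. measure_pmf.prob D {T. i\<in>T} \<le> measure_pmf.prob D0 {A. i\<in>A} / measure_pmf.prob D0 {A. i \<in> ?cl A}"
    by blast
  have cont: "contagious n E r S" if S: "S \<in> set_pmf D" for S
  proof -
    from S D(1) have "S \<subseteq> {1..n}" "{1..n} \<subseteq> ?cl S" by auto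
    moreover have "?cl S \<subseteq> {1..n}" using bp_closure_sub[of n E r S] \<open>S \<subseteq> {1..n}\<close> by auto
    ultimately show "contagious n E r S" unfolding contagious_def by auto
  qed
  have Dsub: "S \<subseteq> {1..n}" if "S \<in> set_pmf D" for S using D(1) that by auto
  have finD: "finite (set_pmf D)" by (rule finite_subset[of _ "Pow {1..n}"]) (use Dsub in auto)
  have fincont: "finite (card ` {A. contagious n E r A})"
    by (rule finite_imageI, rule finite_subset[of _ "Pow {1..n}"]) (auto simp: contagious_def)
  have mle: "real (m_contag n E r) \<le> (\<integral>S. real (card S) \<partial>D)"
  proof (rule measure_pmf.integral_ge_const)
    show "integrable (measure_pmf D) (\<lambda>S. real (card S))" by (rule integrable_measure_pmf_finite[OF finD])
    show "AE S in measure_pmf D. real (m_contag n E r) \<le> real (card S)"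
    proof (rule AE_pmfI)
      fix S assume "S \<in> set_pmf D"
      hence "card S \<in> card ` {A. contagious n E r A}" using cont by auto
      hence "m_contag n E r \<le> card S" unfolding m_contag_def using fincont by (rule Min_le[rotated])
      thus "real (m_contag n E r) \<le> real (card S)" by simp
    qed
  qed
  also have "(\<integral>S. real (card S) \<partial>D) = (\<integral>S. (\<Sum>i\<in>{1..n}. indicator {S. i \<in> S} S) \<partial>D)"
  proof (rule integral_cong_AE)
    show "AE S in measure_pmf D. real (card S) = (\<Sum>i\<in>{1..n}. indicator {S. i \<in> S} S)"
    proof (rule AE_pmfI)
      fix S assume "S \<in> set_pmf D"
      hence "S \<subseteq> {1..n}" by (rule Dsub)
      hence "card S = card ({1..n} \<inter> S)" by (simp add: Int_absorb1)
      also have "\<dots> = (\<Sum>i\<in>{1..n}. indicator S i)" by (simp add: sum_indicator_eq_card)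
      finally have "real (card S) = real (\<Sum>i\<in>{1..n}. indicator S i)" by simp
      also have "\<dots> = (\<Sum>i\<in>{1..n}. indicator {S. i \<in> S} S)" by (simp add: indicator_def)
      finally show "real (card S) = (\<Sum>i\<in>{1..n}. indicator {S. i \<in> S} S)" .
    qed
  qed auto
  also have "\<dots> = (\<Sum>i\<in>{1..n}. measure_pmf.prob D {S. i \<in> S})"
    by (subst Bochner_Integration.integral_sum) (auto simp: integrable_measure_pmf_finite[OF finD])
  also have "\<dots> \<le> (\<Sum>i\<in>{1..n}. C * p)"
  proof (rule sum_mono)
    fix i assume i: "i \<in> {1..n}"
    define q where "q = measure_pmf.prob D0 {A. i \<in> ?cl A}"
    have q: "q \<ge> 1 / C" using hq i by (simp add: q_def D0_def)
    have qpos: "q > 0" using pos i by (simp add: q_def)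
    have "measure_pmf.prob D {S. i \<in> S} \<le> measure_pmf.prob D0 {A. i \<in> A} / q"
      using D(2) i unfolding q_def by blast
    hence "measure_pmf.prob D {S. i \<in> S} \<le> p / q" using pi[OF i] by simp
    also have "p / q \<le> C * p"
    proof -
      have "C * q \<ge> 1" using q C1 by (simp add: field_simps)
      hence "p \<le> C * p * q" using p0 by (metis mult.assoc mult_left_mono mult.right_neutral mult.commute)
      thus ?thesis using qpos by (simp add: divide_le_eq)
    qed
    finally show "measure_pmf.prob D {S. i \<in> S} \<le> C * p" .
  qed
  also have "\<dots> = C * p * real n" by simp
  finally show "real (m_contag n E r) \<le> C * p * real n" .
qed

end
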